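(* \[ \frac{7\zeta(3)}{2}=\sum_{n=0}^{\infty}\left(\frac14\right)^n\frac{(1)_n^3}{\left(\frac32\right)_n^3}\Big((6n+4)\,O_{n+1}-1\Big). \]
   Context: $(x)_n=x(x+1)\cdots(x+n-1)$ is the Pochhammer symbol, with $(x)_0=1$. $O_m=\sum_{j=1}^{m}\frac{1}{2j-1}$ is the $m$-th odd harmonic number. $\zeta(3)=\sum_{j\ge1}j^{-3}$ is Apéry's constant. *)

theory Defs
  imports "HOL-Analysis.Analysis"
begin

definition odd_harmonic :: "nat \<Rightarrow> real" where
  "odd_harmonic m = (\<Sum>j=1..m. 1 / (2 * real j - 1))"

definition apery_zeta3 :: real where
  "apery_zeta3 = (\<Sum>j. 1 / (real (Suc j)) ^ 3)"

end

theory Submission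
  imports Defs "HOL-Real_Asymp.Real_Asymp"
begin

definition Bf :: "real \<Rightarrow> nat \<Rightarrow> real" where
  "Bf x n = (1/4)^n * fact n ^ 3 / (pochhammer (3/2) n * (pochhammer (x + 1/2) (Suc n))^2)"

definition hf :: "real \<Rightarrow> nat \<Rightarrow> real" where
  "hf x n = (\<Sum>j\<le>n. 1 / (x + 1/2 + real j))"

definition uf :: "real \<Rightarrow> nat \<Rightarrow> real" where
  "uf x n = Bf x n * ((3 * real n + 2 + 2 * x) * hf x n - 1)"

definition vf :: "real \<Rightarrow> nat \<Rightarrow> real" where
  "vf x n = 2 * Bf x n * (2 * real n + 1) * hf x n"

lemma poch_pos: "x \<ge> 0 \<Longrightarrow> pochhammer (x + 1/2) n > (0::real)"
  by (rule pochhammer_pos) simp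

lemma poch32_pos: "pochhammer (3/2) n > (0::real)"
  by (rule pochhammer_pos) simp

lemma Bf_pos: "x \<ge> 0 \<Longrightarrow> Bf x n > 0"
  unfolding Bf_def using poch_pos[of x "Suc n"] poch32_pos[of n]
  by (intro divide_pos_pos mult_pos_pos) auto

lemma Bf_Suc:
  assumes "x \<ge> 0"
  shows "Bf x (Suc n) = Bf x n * (real n + 1)^3 / (4 * (real n + 3/2) * (x + real n + 3/2)^2)"
proof -
  have p1: "pochhammer (3/2) (Suc n) = pochhammer (3/2) n * (3/2 + real n)"
    by (simp add: pochhammer_Suc)
  have p2: "pochhammer (x + 1/2) (Suc (Suc n)) = pochhammer (x+1/2) (Suc n) * (x + real n + 3/2)"
    by (simp add: pochhammer_Suc[of _ "Suc n"] algebra_simps)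
  have a: "pochhammer (3/2) n > (0::real)" by (rule poch32_pos)
  have b: "pochhammer (x + 1/2) (Suc n) > 0" using poch_pos[OF assms] .
  have c: "x + real n + 3/2 > 0" using assms by simp
  show ?thesis unfolding Bf_def p1 p2 using a b c
    by (simp add: field_simps power2_eq_square power3_eq_cube)
qed

lemma Bf_shift:
  assumes "x \<ge> 0"
  shows "Bf (x + 1) n = Bf x n * (x + 1/2)^2 / (x + real n + 3/2)^2"
proof -
  have e1: "pochhammer (x + 1/2) (Suc (Suc n)) = (x + 1/2) * pochhammer (x + 1 + 1/2) (Suc n)"
    by (simp add: pochhammer_rec[of _ "Suc n"] algebra_simps)
  have e2: "pochhammer (x + 1/2) (Suc (Suc n)) = pochhammer (x+1/2) (Suc n) * (x + real n + 3/2)"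
    by (simp add: pochhammer_Suc[of _ "Suc n"] algebra_simps)
  have a: "pochhammer (3/2) n > (0::real)" by (rule poch32_pos)
  have b: "pochhammer (x + 1/2) (Suc n) > 0" using poch_pos[OF assms] .
  have c: "x + real n + 3/2 > 0" using assms by simp
  have d: "x + 1/2 > 0" using assms by simp
  have e: "pochhammer (x + 1 + 1/2) (Suc n) = pochhammer (x+1/2) (Suc n) * (x + real n + 3/2) / (x + 1/2)"
    using e1 e2 d by (simp add: field_simps)
  show ?thesis unfolding Bf_def e using a b c d
    by (simp add: field_simps power2_eq_square)
qed

lemma hf_Suc: "hf x (Suc n) = hf x n + 1 / (x + real n + 3/2)"
  unfolding hf_def by (simp add: algebra_simps)

lemma hf_shift: "hf (x + 1) n = hf x n - 1 / (x + 1/2) + 1 / (x + real n + 3/2)"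
proof (induction n)
  case 0
  then show ?case by (simp add: hf_def algebra_simps)
next
  case (Suc n)
  have "hf (x+1) (Suc n) = hf (x+1) n + 1 / (x + 1 + real n + 3/2)" by (rule hf_Suc)
  also have "\<dots> = hf x (Suc n) - 1 / (x + 1/2) + 1 / (x + real (Suc n) + 3/2)"
    using Suc by (simp add: hf_Suc algebra_simps)
  finally show ?case .
qed

lemma wz_alg:
  fixes a r e m b H :: real
  assumes "a > 0" "r > 0" "e > 0" "r = a + m + 1" "e = m + 3/2"
  shows "2 * (b * (m+1)^3 / (4*e*r^2)) * (2*(m+1) + 1) * (H + 1/r) - 2*b*(2*m+1)*H
       = b*a^2/r^2 * ((3*m + 2 + 2*(a + 1/2)) * (H - 1/a + 1/r) - 1) - b*((3*m+2+2*(a - 1/2))*H - 1)"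
proof -
  have nz: "a \<noteq> 0" "r \<noteq> 0" "e \<noteq> 0" using assms(1-3) by auto
  show ?thesis
    using nz
    apply (simp add: field_simps)
    apply (simp only: assms(4,5))
    apply algebra
    done
qed

lemma wz:
  assumes "x \<ge> 0"
  shows "vf x (Suc n) - vf x n = uf (x + 1) n - uf x n"
proof -
  have xa: "x = (x + 1/2) - 1/2" by simp
  have "vf x (Suc n) - vf x n = 2 * (Bf x n * (real n+1)^3 / (4*(real n + 3/2)*(x+real n+3/2)^2)) * (2*(real n+1) + 1) * (hf x n + 1/(x + real n + 3/2)) - 2*Bf x n*(2*real n+1)*hf x n"
    unfolding vf_def Bf_Suc[OF assms] hf_Suc by simp
  also have "\<dots> = Bf x n*(x+1/2)^2/(x + real n + 3/2)^2 * ((3*real n + 2 + 2*((x+1/2) + 1/2)) * (hf x n - 1/(x+1/2) + 1/(x + real n + 3/2)) - 1) - Bf x n*((3*real n+2+2*((x+1/2) - 1/2))*hf x n - 1)"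
    by (rule wz_alg[where a="x+1/2" and r="x + real n + 3/2" and e="real n + 3/2"]) (use assms in auto)
  also have "\<dots> = uf (x + 1) n - uf x n"
    unfolding uf_def Bf_shift[OF assms] hf_shift by (simp add: algebra_simps)
  finally show ?thesis .
qed

lemma Bf_0: "x \<ge> 0 \<Longrightarrow> Bf x 0 = 1 / (x + 1/2)^2"
  unfolding Bf_def by simp

lemma Bf_le:
  assumes "x \<ge> 0"
  shows "Bf x n \<le> (1/4)^n / (x + 1/2)^2"
proof (induction n)
  case 0
  then show ?case using Bf_0[OF assms] by simp
next
  case (Suc n)
  define q where "q = (real n + 1)^3 / (4 * (real n + 3/2) * (x + real n + 3/2)^2)"
  have q0: "q \<ge> 0" unfolding q_def using assms by simp
  have "(real n + 1)^3 = (real n + 1) * (real n + 1)^2" by (simp add: power3_eq_cube power2_eq_square)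
  also have "\<dots> \<le> (real n + 3/2) * (x + real n + 3/2)^2"
    using assms by (intro mult_mono power_mono) auto
  finally have le: "(real n + 1)^3 \<le> (real n + 3/2) * (x + real n + 3/2)^2" .
  have Dp: "(real n + 3/2) * (x + real n + 3/2)^2 > 0" using assms by simp
  have xp: "x + real n + 3/2 > 0" using assms by simp
  have "q = (real n + 1)^3 / (4 * ((real n + 3/2) * (x + real n + 3/2)^2))"
    unfolding q_def by (simp add: mult.assoc)
  also have "\<dots> \<le> ((real n + 3/2) * (x + real n + 3/2)^2) / (4 * ((real n + 3/2) * (x + real n + 3/2)^2))"
    by (rule divide_right_mono[OF le]) (use Dp in simp)
  also have "\<dots> = 1/4" using Dp xp by simp
  finally have "q \<le> 1/4" .
  have "Bf x (Suc n) = Bf x n * q" unfolding q_def Bf_Suc[OF assms] by simp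
  also have "\<dots> \<le> ((1/4)^n / (x + 1/2)^2) * (1/4)"
    using Suc \<open>q \<le> 1/4\<close> q0 by (intro mult_mono) auto
  also have "\<dots> = (1/4)^Suc n / (x + 1/2)^2" by simp
  finally show ?case .
qed

lemma hf_upper:
  assumes "x \<ge> 0"
  shows "hf x n \<le> (real n + 1) / (x + 1/2)"
proof -
  have "hf x n \<le> (\<Sum>j\<le>n. 1 / (x + 1/2))"
    unfolding hf_def using assms by (intro sum_mono frac_le) auto
  also have "\<dots> = (real n + 1) / (x + 1/2)" by simp
  finally show ?thesis .
qed

lemma hf_lower:
  assumes "x \<ge> 0"
  shows "hf x n \<ge> 1 / (x + 1/2)"
proof (induction n)
  case 0
  then show ?case by (simp add: hf_def)
next
  case (Suc n)
  have "1 / (x + real n + 3/2) \<ge> 0" using assms by simp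
  then show ?case using Suc hf_Suc[of x n] by linarith
qed

definition wf :: "nat \<Rightarrow> real" where
  "wf n = (1/4)^n * (3 * real n + 2) * (real n + 1)"

lemma wf_nonneg: "wf n \<ge> 0"
  unfolding wf_def by simp

lemma wf_summable: "summable wf"
proof (rule summable_ratio_test[where c="1/2" and N=2])
  fix n :: nat assume n: "n \<ge> 2"
  have "(3 * real (Suc n) + 2) * (real (Suc n) + 1) \<le> 2 * ((3 * real n + 2) * (real n + 1))"
  proof -
    have "real n \<ge> 2" using n by simp
    then have "2 * real n \<le> real n * real n" by (intro mult_right_mono) auto
    moreover have "(3 * real (Suc n) + 2) * (real (Suc n) + 1) = 3*(real n*real n) + 11*real n + 10"
      by (simp add: algebra_simps)
    moreover have "2 * ((3 * real n + 2) * (real n + 1)) = 6*(real n*real n) + 10*real n + 4"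
      by (simp add: algebra_simps)
    ultimately show ?thesis using \<open>real n \<ge> 2\<close> by linarith
  qed
  then have le: "(1/4)^n * ((3 * real (Suc n) + 2) * (real (Suc n) + 1)) / 4 \<le> (1/4)^n * (2 * ((3 * real n + 2) * (real n + 1))) / 4"
    by (intro mult_left_mono divide_right_mono) auto
  have "wf (Suc n) = (1/4)^n * ((3 * real (Suc n) + 2) * (real (Suc n) + 1)) / 4"
    unfolding wf_def by (simp add: mult.assoc)
  also note le
  also have "(1/4)^n * (2 * ((3 * real n + 2) * (real n + 1))) / 4 = 1/2 * wf n"
    unfolding wf_def by (simp add: field_simps)
  finally have "wf (Suc n) \<le> 1/2 * wf n" .
  then show "norm (wf (Suc n)) \<le> 1/2 * norm (wf n)"
    using wf_nonneg[of n] wf_nonneg[of "Suc n"] by simp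
qed simp

lemma aux_eq1:
  fixes d p A B :: real
  assumes "d > 0"
  shows "(p / d^2) * (A * (2*d)) * (B / d) = 2 / d^2 * (p * A * B)"
  using assms by (simp add: field_simps power2_eq_square)

lemma aux_eq2:
  fixes d p A B :: real
  assumes "d > 0"
  shows "2 * ((p / d^2) * A * (B / d)) = 2 / d^3 * (p * A * B)"
  using assms by (simp add: field_simps power2_eq_square power3_eq_cube)

lemma uf_nonneg:
  assumes "x \<ge> 0"
  shows "uf x n \<ge> 0"
proof -
  have h: "hf x n \<ge> 1 / (x + 1/2)" by (rule hf_lower[OF assms])
  have "(3 * real n + 2 + 2 * x) * hf x n \<ge> (2 * x + 1) * (1 / (x + 1/2))"
    using assms h by (intro mult_mono) auto
  also have "(2 * x + 1) * (1 / (x + 1/2)) = 2" using assms by (simp add: field_simps)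
  finally show ?thesis unfolding uf_def using Bf_pos[OF assms, of n] by simp
qed

lemma uf_upper:
  assumes "x \<ge> 0"
  shows "uf x n \<le> 2 / (x + 1/2)^2 * wf n"
proof -
  have B0: "Bf x n \<ge> 0" using Bf_pos[OF assms] by (simp add: less_imp_le)
  have h0: "hf x n \<ge> 0"
  proof -
    have "1 / (x + 1/2) \<ge> 0" using assms by simp
    then show ?thesis using hf_lower[OF assms, of n] by linarith
  qed
  have "uf x n \<le> Bf x n * (3 * real n + 2 + 2 * x) * hf x n"
    unfolding uf_def using B0 by (simp add: algebra_simps)
  also have "\<dots> \<le> ((1/4)^n / (x + 1/2)^2) * ((3 * real n + 2) * (2 * x + 1)) * ((real n + 1) / (x + 1/2))"
  proof (intro mult_mono)
    show "3 * real n + 2 + 2 * x \<le> (3 * real n + 2) * (2 * x + 1)"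
    proof -
      have "0 \<le> x * real n" using assms by simp
      moreover have "(3 * real n + 2) * (2 * x + 1) = 3 * real n + 2 + 6 * (x * real n) + 4 * x"
        by (simp add: algebra_simps)
      ultimately show ?thesis using assms by linarith
    qed
  qed (use Bf_le[OF assms] hf_upper[OF assms] B0 h0 assms in auto)
  also have "\<dots> = 2 / (x + 1/2)^2 * wf n"
  proof -
    have c: "2 * x + 1 = 2 * (x + 1/2)" by simp
    have "x + 1/2 > 0" using assms by simp
    then show ?thesis unfolding c wf_def by (rule aux_eq1)
  qed
  finally show ?thesis .
qed

lemma vf_nonneg:
  assumes "x \<ge> 0"
  shows "vf x n \<ge> 0"
proof -
  have h0: "hf x n \<ge> 0"
  proof -
    have "1 / (x + 1/2) \<ge> 0" using assms by simp
    then show ?thesis using hf_lower[OF assms, of n] by linarith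
  qed
  then show ?thesis unfolding vf_def using Bf_pos[OF assms, of n] by simp
qed

lemma vf_upper:
  assumes "x \<ge> 0"
  shows "vf x n \<le> 2 / (x + 1/2)^3 * wf n"
proof -
  have B0: "Bf x n \<ge> 0" using Bf_pos[OF assms] by (simp add: less_imp_le)
  have h0: "hf x n \<ge> 0"
  proof -
    have "1 / (x + 1/2) \<ge> 0" using assms by simp
    then show ?thesis using hf_lower[OF assms, of n] by linarith
  qed
  have "vf x n = 2 * (Bf x n * (2 * real n + 1) * hf x n)" unfolding vf_def by simp
  also have "\<dots> \<le> 2 * (((1/4)^n / (x + 1/2)^2) * (3 * real n + 2) * ((real n + 1) / (x + 1/2)))"
  proof (intro mult_left_mono mult_mono)
  qed (use Bf_le[OF assms] hf_upper[OF assms] B0 h0 assms in auto)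
  also have "\<dots> = 2 / (x + 1/2)^3 * wf n"
  proof -
    have "x + 1/2 > 0" using assms by simp
    then show ?thesis unfolding wf_def by (rule aux_eq2)
  qed
  finally show ?thesis .
qed

lemma uf_summable:
  assumes "x \<ge> 0"
  shows "summable (uf x)"
proof (rule summable_comparison_test'[where g="\<lambda>n. 2 / (x + 1/2)^2 * wf n"])
  show "summable (\<lambda>n. 2 / (x + 1/2)^2 * wf n)" by (intro summable_mult wf_summable)
  fix n :: nat
  show "norm (uf x n) \<le> 2 / (x + 1/2)^2 * wf n"
    using uf_nonneg[OF assms, of n] uf_upper[OF assms, of n] by simp
qed

lemma wf_lim: "wf \<longlonglongrightarrow> 0"
  by (rule summable_LIMSEQ_zero[OF wf_summable])

lemma vf_lim:
  assumes "x \<ge> 0"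
  shows "vf x \<longlonglongrightarrow> 0"
proof (rule Lim_null_comparison)
  show "\<forall>\<^sub>F n in sequentially. norm (vf x n) \<le> 2 / (x + 1/2)^3 * wf n"
    using vf_nonneg[OF assms] vf_upper[OF assms] by (intro always_eventually allI) simp
  show "(\<lambda>n. 2 / (x + 1/2)^3 * wf n) \<longlonglongrightarrow> 0"
    by (rule tendsto_mult_right_zero[OF wf_lim])
qed

lemma vf_0:
  assumes "x \<ge> 0"
  shows "vf x 0 = 2 / (x + 1/2)^3"
  unfolding vf_def Bf_0[OF assms] hf_def by (simp add: power3_eq_cube power2_eq_square)

lemma U_step:
  assumes "x \<ge> 0"
  shows "suminf (uf x) - suminf (uf (x + 1)) = 2 / (x + 1/2)^3"
proof -
  have x1: "x + 1 \<ge> 0" using assms by simp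
  have "(\<lambda>n. vf x (Suc n) - vf x n) sums (0 - vf x 0)"
    by (rule telescope_sums[OF vf_lim[OF assms]])
  then have "(\<lambda>n. uf (x + 1) n - uf x n) sums (- vf x 0)"
    using wz[OF assms] by simp
  moreover have "(\<lambda>n. uf (x + 1) n - uf x n) sums (suminf (uf (x + 1)) - suminf (uf x))"
    by (intro sums_diff summable_sums uf_summable x1 assms)
  ultimately have "- vf x 0 = suminf (uf (x + 1)) - suminf (uf x)"
    by (rule sums_unique2)
  then show ?thesis using vf_0[OF assms] by simp
qed

lemma U_bound:
  assumes "x \<ge> 0"
  shows "0 \<le> suminf (uf x) \<and> suminf (uf x) \<le> 2 / (x + 1/2)^2 * suminf wf"
proof
  show "0 \<le> suminf (uf x)" by (intro suminf_nonneg uf_summable assms uf_nonneg)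
  have "suminf (uf x) \<le> suminf (\<lambda>n. 2 / (x + 1/2)^2 * wf n)"
    by (intro suminf_le uf_upper assms uf_summable summable_mult wf_summable)
  also have "\<dots> = 2 / (x + 1/2)^2 * suminf wf"
    by (rule suminf_mult[OF wf_summable])
  finally show "suminf (uf x) \<le> 2 / (x + 1/2)^2 * suminf wf" .
qed

lemma U_lim: "(\<lambda>k. suminf (uf (real k))) \<longlonglongrightarrow> 0"
proof (rule Lim_null_comparison)
  show "\<forall>\<^sub>F k in sequentially. norm (suminf (uf (real k))) \<le> 2 / (real k + 1/2)^2 * suminf wf"
    using U_bound by (intro always_eventually allI) auto
  have "(\<lambda>k. 2 / (real k + 1/2)^2) \<longlonglongrightarrow> 0" by real_asymp
  then show "(\<lambda>k. 2 / (real k + 1/2)^2 * suminf wf) \<longlonglongrightarrow> 0"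
    by (rule tendsto_mult_left_zero)
qed

lemma odd_cubes: "(\<lambda>k. 1 / (2 * real k + 1)^3) sums (7 * apery_zeta3 / 8)"
proof -
  define f where "f j = 1 / (real (Suc j))^3" for j
  have sf: "summable f"
  proof -
    have "summable (\<lambda>n. inverse (real n ^ 3))" by (rule inverse_power_summable) simp
    then have "summable (\<lambda>n. inverse (real (Suc n) ^ 3))" by (subst summable_Suc_iff)
    then show ?thesis unfolding f_def by (simp add: inverse_eq_divide)
  qed
  have z: "f sums apery_zeta3" unfolding apery_zeta3_def f_def[symmetric] using sf by (rule summable_sums)
  have g: "(\<lambda>n. sum f {n * 2 ..< n * 2 + 2}) sums apery_zeta3" by (rule sums_group[OF z]) simp
  have e: "sum f {n * 2 ..< n * 2 + 2} = 1 / (2 * real n + 1)^3 + f n / 8" for n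
  proof -
    have "{n * 2 ..< n * 2 + 2} = {2*n, 2*n+1}" by auto
    then have "sum f {n * 2 ..< n * 2 + 2} = f (2*n) + f (2*n+1)" by simp
    moreover have "f (2*n) = 1 / (2 * real n + 1)^3" unfolding f_def by (simp add: algebra_simps)
    moreover have "f (2*n+1) = f n / 8" unfolding f_def by (simp add: field_simps power3_eq_cube)
    ultimately show ?thesis by simp
  qed
  have "(\<lambda>n. 1 / (2 * real n + 1)^3 + f n / 8) sums apery_zeta3" using g unfolding e .
  moreover have "(\<lambda>n. f n / 8) sums (apery_zeta3 / 8)" by (rule sums_divide[OF z])
  ultimately have "(\<lambda>n. (1 / (2 * real n + 1)^3 + f n / 8) - f n / 8) sums (apery_zeta3 - apery_zeta3 / 8)"
    by (rule sums_diff)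
  then show ?thesis by simp
qed

lemma hf_0: "hf 0 n = 2 * odd_harmonic (n + 1)"
proof (induction n)
  case 0
  then show ?case by (simp add: hf_def odd_harmonic_def)
next
  case (Suc n)
  have "odd_harmonic (Suc n + 1) = odd_harmonic (n + 1) + 1 / (2 * (real n + 2) - 1)"
    unfolding odd_harmonic_def by simp
  moreover have "hf 0 (Suc n) = hf 0 n + 1 / (real n + 3/2)" using hf_Suc[of 0 n] by simp
  moreover have "1 / (real n + 3/2) = 2 * (1 / (2 * (real n + 2) - 1))" by (simp add: field_simps)
  ultimately show ?case using Suc by simp
qed

lemma uf_0: "uf 0 n = 4 * ((1/4) ^ n * (pochhammer (1::real) n) ^ 3 / (pochhammer (3/2::real) n) ^ 3
              * ((6 * real n + 4) * odd_harmonic (n + 1) - 1))"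
proof -
  have p: "pochhammer (1/2::real) (Suc n) = 1/2 * pochhammer (3/2) n"
    by (simp add: pochhammer_rec)
  have pp: "pochhammer (3/2::real) n > 0" by (rule poch32_pos)
  show ?thesis
    unfolding uf_def Bf_def hf_0 using pp
    by (simp add: p pochhammer_fact field_simps power2_eq_square power3_eq_cube)
qed

theorem mainTheorem3:
  shows "(\<lambda>n. (1/4) ^ n * (pochhammer (1::real) n) ^ 3 / (pochhammer (3/2::real) n) ^ 3
              * ((6 * real n + 4) * odd_harmonic (n + 1) - 1))
         sums (7 * apery_zeta3 / 2)"
proof -
  define U where "U k = suminf (uf (real k))" for k
  have "(\<lambda>k. U k - U (Suc k)) sums (U 0 - 0)"
    unfolding U_def by (rule telescope_sums'[OF U_lim])
  moreover have "U k - U (Suc k) = 16 * (1 / (2 * real k + 1)^3)" for k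
  proof -
    have "U k - U (Suc k) = 2 / (real k + 1/2)^3"
      unfolding U_def using U_step[of "real k"] by (simp add: add.commute)
    also have "\<dots> = 16 * (1 / (2 * real k + 1)^3)"
      by (simp add: field_simps power3_eq_cube)
    finally show ?thesis .
  qed
  ultimately have "(\<lambda>k. 16 * (1 / (2 * real k + 1)^3)) sums U 0" by simp
  moreover have "(\<lambda>k. 16 * (1 / (2 * real k + 1)^3)) sums (16 * (7 * apery_zeta3 / 8))"
    by (rule sums_mult[OF odd_cubes])
  ultimately have U0: "U 0 = 14 * apery_zeta3" by (simp add: sums_unique2)
  have "uf 0 sums U 0" unfolding U_def using uf_summable[of 0] by (simp add: summable_sums)
  then have "(\<lambda>n. uf 0 n / 4) sums (U 0 / 4)" by (rule sums_divide)
  then show ?thesis unfolding uf_0 U0 by simp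
qed

end
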